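(* Let $r\in\mathbb{F}_2((x^{-1}))$ with $\deg(r)\ge0$. If $[r](0)=1$ or $[r](1)=1$, then $[S(r)](0)=1$.
   Context: $\mathbb{F}_2((x^{-1}))$ is the field of formal series $\sum_{z\in\mathbb{Z}}a_zx^z$, $a_z\in\mathbb{F}_2$, with $a_z\ne0$ for only finitely many positive $z$; $\deg$ is the largest exponent with nonzero coefficient. The polynomial part is $[\sum a_zx^z]=\sum_{z\ge0}a_zx^z$. $S(r)=\frac{r}{x+1}$ if $[r](1)=0$ and $S(r)=\frac{xr}{x+1}$ if $[r](1)=1$. *)

theory Defs
  imports "HOL-Library.Z2" "HOL-Computational_Algebra.Formal_Laurent_Series"
begin

(* F_2((x^{-1})) is represented as the library field of formal Laurent series
   bit fls in the variable y = x^{-1}: the coefficient of x^z is the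
   coefficient of y^(-z). *)
type_synonym F2Lx = "bit fls"

definition coefx :: "F2Lx \<Rightarrow> int \<Rightarrow> bit" where
  "coefx r z = fls_nth r (- z)"

definition xvar :: F2Lx where
  "xvar = fls_X_inv"

(* degree in x: largest exponent of x with nonzero coefficient (meaningful for r \<noteq> 0) *)
definition degx :: "F2Lx \<Rightarrow> int" where
  "degx r = - fls_subdegree r"

(* evaluation of the polynomial part [r] at a point a of F_2 *)
definition polypart_eval :: "F2Lx \<Rightarrow> bit \<Rightarrow> bit" where
  "polypart_eval r a = (\<Sum>z\<in>{0..degx r}. coefx r z * a ^ nat z)"

definition S :: "F2Lx \<Rightarrow> F2Lx" where
  "S r = (if polypart_eval r 1 = 0 then r / (xvar + 1) else (xvar * r) / (xvar + 1))"

end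

theory Submission
  imports Defs
begin

lemma bit_add_self: "(a::bit) + a = 0"
  by (cases a) simp_all

lemma bit_solve: "(a::bit) + b = c \<Longrightarrow> a = b + c"
  by (cases a; cases b; cases c) simp_all

lemma pp0: "polypart_eval t 0 = fls_nth t 0"
proof (cases "degx t \<ge> 0")
  case True
  have "polypart_eval t 0 = (\<Sum>z\<in>{0..degx t}. if z = 0 then coefx t z else 0)"
    unfolding polypart_eval_def
    by (intro sum.cong) (auto simp: nat_eq_iff)
  also have "\<dots> = coefx t 0" using True by (simp add: sum.delta)
  finally show ?thesis by (simp add: coefx_def)
next
  case False
  hence "fls_nth t 0 = 0"
    using fls_subdegree_leI[of t 0] by (auto simp: degx_def)
  with False show ?thesis by (simp add: polypart_eval_def)
qed

lemma pp1: "degx r \<ge> 0 \<Longrightarrow> polypart_eval r 1 = (\<Sum>i\<le>nat (degx r). fls_nth r (- int i))"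
  unfolding polypart_eval_def coefx_def
proof -
  assume d: "degx r \<ge> 0"
  have eq: "{0..degx r} = int ` {..nat (degx r)}"
  proof (intro equalityI subsetI)
    fix x assume "x \<in> {0..degx r}"
    thus "x \<in> int ` {..nat (degx r)}" by (intro image_eqI[of _ _ "nat x"]) auto
  qed (use d in \<open>auto simp: le_nat_iff\<close>)
  have "(\<Sum>z\<in>{0..degx r}. fls_nth r (- z) * 1 ^ nat z) = (\<Sum>i\<in>int ` {..nat (degx r)}. fls_nth r (- i))"
    by (simp only: eq power_one mult_1_right)
  also have "\<dots> = (\<Sum>i\<le>nat (degx r). fls_nth r (- int i))"
    by (subst sum.reindex) (auto simp: inj_on_def)
  finally show "(\<Sum>z\<in>{0..degx r}. fls_nth r (- z) * 1 ^ nat z) = (\<Sum>i\<le>nat (degx r). fls_nth r (- int i))" .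
qed

lemma pp1_ext:
  assumes "degx r \<ge> 0" "m \<ge> nat (degx r)"
  shows "(\<Sum>i\<le>m. fls_nth r (- int i)) = polypart_eval r 1"
  using assms(2)
proof (induction m rule: dec_induct)
  case base
  then show ?case using pp1[OF assms(1)] by simp
next
  case (step m)
  have "fls_nth r (- int (Suc m)) = 0"
  proof (intro fls_eq0_below_subdegree)
    have "int m \<ge> degx r" using step(1) assms(1) by (simp add: nat_le_iff)
    thus "- int (Suc m) < fls_subdegree r" by (simp add: degx_def)
  qed
  then show ?case using step by simp
qed

lemma telescope:
  fixes s :: F2Lx
  assumes "\<And>n. fls_nth s (n + 1) + fls_nth s n = c n"
  shows "fls_nth s 0 = fls_nth s (- int k) + (\<Sum>i<k. c (- int (Suc i)))"
proof (induction k)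
  case 0
  then show ?case by simp
next
  case (Suc k)
  have e: "- int (Suc k) + 1 = - int k" by simp
  have "fls_nth s (- int k) = fls_nth s (- int (Suc k)) + c (- int (Suc k))"
    using bit_solve[OF assms[of "- int (Suc k)", unfolded e]] .
  hence "fls_nth s 0 = (fls_nth s (- int (Suc k)) + c (- int (Suc k))) + (\<Sum>i<k. c (- int (Suc i)))"
    using Suc.IH by (simp only:)
  then show ?case by (simp only: sum.lessThan_Suc add_ac)
qed

lemma Xp1_nz: "xvar + 1 \<noteq> (0::F2Lx)"
proof
  assume "xvar + 1 = (0::F2Lx)"
  hence "fls_nth (xvar + 1) (-1) = 0" by simp
  thus False by (simp add: xvar_def)
qed

lemma key:
  assumes "s * (xvar + 1) = t"
  shows "fls_nth s (n + 1) + fls_nth s n = fls_nth t n"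
proof -
  have "t = fls_shift 1 s + s" using assms[symmetric]
    by (simp add: distrib_left xvar_def fls_X_inv_times_conv_shift)
  thus ?thesis by simp
qed

theorem lemma3p2:
  fixes r :: F2Lx
  assumes "r \<noteq> 0" and "degx r \<ge> 0"
    and "polypart_eval r 0 = 1 \<or> polypart_eval r 1 = 1"
  shows "polypart_eval (S r) 0 = 1"
proof -
  define s where "s = S r"
  define k where "k = Suc (max (nat (degx r)) (nat (- fls_subdegree s)))"
  have sk: "fls_nth s (- int k) = 0"
  proof (intro fls_eq0_below_subdegree)
    have "int (nat (- fls_subdegree s)) \<ge> - fls_subdegree s" by simp
    moreover have "k > nat (- fls_subdegree s)" by (simp add: k_def less_Suc_eq_le)
    hence "int k > int (nat (- fls_subdegree s))" by (simp only: of_nat_less_iff)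
    ultimately show "- int k < fls_subdegree s" by linarith
  qed
  have kd: "k - 1 \<ge> nat (degx r)" "k \<ge> nat (degx r)" by (auto simp: k_def)
  show ?thesis
  proof (cases "polypart_eval r 1 = 0")
    case True
    hence r0: "fls_nth r 0 = 1" using assms(3) pp0[of r] by simp
    have "s * (xvar + 1) = r" using True Xp1_nz by (simp add: s_def S_def)
    from telescope[OF key[OF this], of k] sk
    have "fls_nth s 0 = (\<Sum>i<k. fls_nth r (- int (Suc i)))" by simp
    also have "\<dots> + fls_nth r (- int 0) = (\<Sum>i\<le>k. fls_nth r (- int i))"
      by (simp only: lessThan_Suc_atMost[symmetric] sum.lessThan_Suc_shift add.commute)
    also have "\<dots> = 0" using pp1_ext[OF assms(2) kd(2)] True by simp
    finally have "fls_nth s 0 + 1 = 0" using r0 by simp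
    hence "fls_nth s 0 = 1" using bit_solve by fastforce
    thus ?thesis by (simp add: s_def pp0)
  next
    case False
    hence P1: "polypart_eval r 1 = 1" by (cases "polypart_eval r 1") auto
    have "s * (xvar + 1) = xvar * r" using False Xp1_nz by (simp add: s_def S_def)
    from telescope[OF key[OF this], of k] sk
    have "fls_nth s 0 = (\<Sum>i<k. fls_nth (xvar * r) (- int (Suc i)))" by simp
    also have "\<dots> = (\<Sum>i<k. fls_nth r (- int i))"
      by (simp add: xvar_def fls_X_inv_times_conv_shift)
    also have "\<dots> = (\<Sum>i\<le>k - 1. fls_nth r (- int i))"
      by (simp add: k_def lessThan_Suc_atMost)
    also have "\<dots> = 1" using pp1_ext[OF assms(2) kd(1)] P1 by simp
    finally show ?thesis by (simp add: s_def pp0)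
  qed
qed

end
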